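(* Let $\Gamma$ be an Arf numerical semigroup with conductor $c$ and multiplicity $e\ge3$. Then $c+e-2$ or $c+e-3$ is an irreducible element of $\Gamma$.
   Context: A numerical semigroup is a subset $\Gamma\subseteq\mathbb N$ containing $0$, closed under addition, with finite complement; write $\Gamma=\{0=\rho_1<\rho_2<\cdots\}$; multiplicity $e=\rho_2$; conductor $c$ = least integer with $c+\mathbb N\subseteq\Gamma$. $\Gamma$ is Arf if $\rho_i+\rho_j-\rho_k\in\Gamma$ for all $i\ge j\ge k$. A nonzero $s\in\Gamma$ is irreducible if it cannot be written as a sum of two nonzero elements of $\Gamma$ (equivalently, its only divisors $t\in\Gamma$ with $s-t\in\Gamma$ are $0$ and $s$). *)

theory Defs
  imports Main
begin

definition numerical_semigroup :: "nat set \<Rightarrow> bool" where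
  "numerical_semigroup S \<longleftrightarrow> 0 \<in> S \<and> (\<forall>x\<in>S. \<forall>y\<in>S. x + y \<in> S) \<and> finite (UNIV - S)"

definition multiplicity_ns :: "nat set \<Rightarrow> nat" where
  "multiplicity_ns S = (LEAST x. x \<in> S \<and> x \<noteq> 0)"

definition conductor :: "nat set \<Rightarrow> nat" where
  "conductor S = (LEAST c. \<forall>n\<ge>c. n \<in> S)"

definition arf :: "nat set \<Rightarrow> bool" where
  "arf S \<longleftrightarrow> (\<forall>x\<in>S. \<forall>y\<in>S. \<forall>z\<in>S. x \<ge> y \<and> y \<ge> z \<longrightarrow> x + y - z \<in> S)"

definition irreducible_ns :: "nat set \<Rightarrow> nat \<Rightarrow> bool" where
  "irreducible_ns S s \<longleftrightarrow> s \<in> S \<and> s \<noteq> 0 \<and>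
     \<not> (\<exists>a\<in>S. \<exists>b\<in>S. a \<noteq> 0 \<and> b \<noteq> 0 \<and> s = a + b)"

end

theory Submission
  imports Defs
begin

theorem proposition4p7:
  fixes S :: "nat set"
  assumes "numerical_semigroup S"
    and "arf S"
    and "multiplicity_ns S \<ge> 3"
  shows "irreducible_ns S (conductor S + multiplicity_ns S - 2)
       \<or> irreducible_ns S (conductor S + multiplicity_ns S - 3)"
proof -
  have fin: "finite (UNIV - S)" using assms(1) unfolding numerical_semigroup_def by blast
  obtain m where m: "\<forall>n\<in>UNIV - S. n < m" using fin finite_nat_set_iff_bounded by blast
  have cex: "\<forall>n\<ge>m. n \<in> S" using m by (meson Diff_iff UNIV_I not_le)
  define c where "c = conductor S"
  have cS: "\<forall>n\<ge>c. n \<in> S" unfolding c_def conductor_def by (rule LeastI[of _ m], rule cex)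
  have ex: "m + 1 \<in> S \<and> m + 1 \<noteq> 0" using cex by auto
  define e where "e = multiplicity_ns S"
  have eS: "e \<in> S \<and> e \<noteq> 0" unfolding e_def multiplicity_ns_def by (rule LeastI[of _ "m+1"], rule ex)
  have emin: "\<And>x. x \<in> S \<Longrightarrow> x \<noteq> 0 \<Longrightarrow> e \<le> x"
    unfolding e_def multiplicity_ns_def by (rule Least_le) simp
  have e3: "e \<ge> 3" using assms(3) e_def by simp
  have cpos: "c > 0"
  proof (rule ccontr)
    assume "\<not> c > 0" then have "1 \<in> S" using cS by auto
    then have "e \<le> 1" using emin by auto
    then show False using e3 by simp
  qed
  have cm1: "c - 1 \<notin> S"
  proof
    assume h: "c - 1 \<in> S"
    have "\<forall>n\<ge>c - 1. n \<in> S" using cS h by (metis Suc_pred' cpos le_eq_less_or_eq Suc_le_eq)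
    then have "c \<le> c - 1" unfolding c_def conductor_def by (rule Least_le)
    then show False using cpos by simp
  qed
  have arf: "\<And>x y z. x \<in> S \<Longrightarrow> y \<in> S \<Longrightarrow> z \<in> S \<Longrightarrow> y \<le> x \<Longrightarrow> z \<le> y \<Longrightarrow> x + y - z \<in> S"
    using assms(2) unfolding arf_def by blast
  have red: "c + e - k - e \<in> S \<and> c + e - k \<ge> 2 * e"
    if k: "k \<le> e" and nir: "\<not> irreducible_ns S (c + e - k)" for k
  proof -
    have "c + e - k \<in> S" using cS k by auto
    moreover have "c + e - k \<noteq> 0" using k cpos by auto
    ultimately obtain a b where ab: "a \<in> S" "b \<in> S" "a \<noteq> 0" "b \<noteq> 0" "c + e - k = a + b"
      using nir unfolding irreducible_ns_def by blast
    have ae: "e \<le> a" "e \<le> b" using emin ab by auto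
    show ?thesis
    proof (cases "b \<le> a")
      case True
      have "a + b - e \<in> S" by (rule arf) (use ab ae eS True in auto)
      then show ?thesis using ab ae by simp
    next
      case False
      have "b + a - e \<in> S" by (rule arf) (use ab ae eS False in auto)
      then show ?thesis using ab ae by (simp add: add.commute)
    qed
  qed
  show ?thesis
  proof (rule ccontr)
    assume "\<not> ?thesis"
    then have n2: "\<not> irreducible_ns S (c + e - 2)" and n3: "\<not> irreducible_ns S (c + e - 3)"
      using c_def e_def by auto
    from red[OF _ n2] e3 have h2: "c - 2 \<in> S" by auto
    from red[OF _ n3] e3 have h3: "c - 3 \<in> S" "c + e - 3 \<ge> 2 * e" by auto
    have c6: "c \<ge> 6" using h3 e3 by linarith
    have "(c - 2) + (c - 2) - (c - 3) \<in> S" by (rule arf) (use h2 h3 c6 in auto)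
    moreover have "(c - 2) + (c - 2) - (c - 3) = c - 1" using c6 by simp
    ultimately show False using cm1 by simp
  qed
qed

end
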